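(* Let $s\in(0,1)$. Given two arbitrary constants $C_1,C_2>0$, there exists a function $G:\mathbb{R}\to[0,+\infty)$ such that: (1) $G$ is compactly supported; (2) $G(x)\le C_1$ for all $x\in\mathbb{R}$; (3) $(-\Delta)^sG(x)\le -C_2|x|^{-(1+2s)}$ for all $x\in\mathbb{R}$ with $\mathrm{dist}(x,\mathrm{supp}(G))\ge1$.
   Context: $(-\Delta)^sw(x)=\sigma_s\,\mathrm{P.V.}\int_{\mathbb{R}}\frac{w(x)-w(y)}{|x-y|^{1+2s}}dy$ with $\sigma_s>0$ the standard normalization constant. *)

theory Defs
  imports "HOL-Analysis.Analysis"
begin

text \<open>Standard normalisation constant of the 1D fractional Laplacian:
  sigma_s = s 4^s Gamma(1/2+s) / (sqrt pi * Gamma(1-s))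
  (= 4^s Gamma(1/2+s) / (sqrt pi |Gamma(-s)|)).\<close>
definition frac_const :: "real \<Rightarrow> real" where
  "frac_const s = s * 4 powr s * Gamma (1/2 + s) / (sqrt pi * Gamma (1 - s))"

definition frac_trunc :: "real \<Rightarrow> (real \<Rightarrow> real) \<Rightarrow> real \<Rightarrow> real \<Rightarrow> real" where
  "frac_trunc s w x eps =
     set_lebesgue_integral lborel {y. eps < \<bar>x - y\<bar>}
       (\<lambda>y. (w x - w y) / abs (x - y) powr (1 + 2 * s))"

definition frac_lap_at :: "real \<Rightarrow> (real \<Rightarrow> real) \<Rightarrow> real \<Rightarrow> real \<Rightarrow> bool" where
  "frac_lap_at s w x v \<longleftrightarrow>
     (\<forall>eps>0. set_integrable lborel {y. eps < \<bar>x - y\<bar>}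
                (\<lambda>y. (w x - w y) / abs (x - y) powr (1 + 2 * s))) \<and>
     ((\<lambda>eps. frac_const s * frac_trunc s w x eps) \<longlongrightarrow> v) (at_right 0)"

definition fsupp :: "(real \<Rightarrow> real) \<Rightarrow> real set" where
  "fsupp G = closure {x. G x \<noteq> 0}"

end

theory Submission
  imports Defs
begin

theorem mainTheorem12:
  fixes s C1 C2 :: real
  assumes "0 < s" "s < 1" "0 < C1" "0 < C2"
  shows "\<exists>G :: real \<Rightarrow> real.
           (\<forall>x. 0 \<le> G x) \<and>
           compact (fsupp G) \<and>
           (\<forall>x. G x \<le> C1) \<and>
           (\<forall>x. (\<forall>y\<in>fsupp G. 1 \<le> dist x y) \<longrightarrow>
                  x \<noteq> 0 \<and>
                  (\<exists>v. frac_lap_at s G x v \<and> v \<le> - C2 * abs x powr (-(1 + 2 * s))))"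
proof -
  define \<sigma> where "\<sigma> = frac_const s"
  have sig: "0 < \<sigma>" unfolding \<sigma>_def frac_const_def using assms
    by (intro divide_pos_pos mult_pos_pos Gamma_real_pos) auto
  define R where "R = 4 * C2 / (\<sigma> * C1) + 1"
  have R: "1 \<le> R" unfolding R_def using sig assms by (simp add: field_simps)
  define p where "p = 1 + 2 * s"
  have p: "0 < p" "p < 3" using assms unfolding p_def by auto
  define S where "S = {-R..R}"
  define G where "G = (\<lambda>y::real. if \<bar>y\<bar> \<le> R then C1 else 0)"
  have Gnz: "{x. G x \<noteq> 0} = S" unfolding G_def S_def using assms by auto
  have fs: "fsupp G = S" unfolding fsupp_def Gnz S_def by simp
  show ?thesis
  proof (intro exI[of _ G] conjI allI impI)
    show "0 \<le> G x" for x using assms by (simp add: G_def)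
    show "G x \<le> C1" for x using assms by (simp add: G_def)
    show "compact (fsupp G)" unfolding fs S_def by simp
  next
    fix x :: real
    assume d: "\<forall>y\<in>fsupp G. 1 \<le> dist x y"
    have xR: "R + 1 \<le> \<bar>x\<bar>"
    proof (rule ccontr)
      assume n: "\<not> ?thesis"
      show False
      proof (cases "\<bar>x\<bar> \<le> R")
        case True
        then have "x \<in> fsupp G" unfolding fs S_def by auto
        with d show False by auto
      next
        case False
        define y where "y = (if x \<ge> 0 then R else -R)"
        have "y \<in> fsupp G" unfolding fs S_def y_def using R by auto
        moreover have "dist x y < 1" unfolding y_def dist_real_def using n False by auto
        ultimately show False using d by fastforce
      qed
    qed
    then show "x \<noteq> 0" using R by auto
    have Gx: "G x = 0" unfolding G_def using xR R by auto
    define h where "h = (\<lambda>y. - C1 / \<bar>x - y\<bar> powr p)"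
    have far: "1 \<le> \<bar>x - y\<bar>" if "y \<in> S" for y using that xR unfolding S_def by auto
    have hcont: "continuous_on S h" unfolding h_def
      by (intro continuous_intros) (use far in force)+
    have int: "integrable lborel (\<lambda>y. indicator S y *\<^sub>R h y)"
      using hcont by (intro borel_integrable_compact) (auto simp: S_def)
    have eqf: "(G x - G y) / \<bar>x - y\<bar> powr (1 + 2 * s) = indicator S y *\<^sub>R h y" for y
      using xR R unfolding Gx h_def p_def G_def S_def by (auto simp: indicator_def)
    define I where "I = (LINT y|lborel. indicator S y *\<^sub>R h y)"
    have meas: "{y. eps < \<bar>x - y\<bar>} \<in> sets lborel" for eps :: real
    proof -
      have "open {y. eps < \<bar>x - y\<bar>}"
        by (intro open_Collect_less continuous_intros)
      then show ?thesis by simp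
    qed
    have trunc: "frac_trunc s G x eps = I" if "eps < 1" for eps
    proof -
      have "frac_trunc s G x eps = (LINT y|lborel. indicator {y. eps < \<bar>x - y\<bar>} y *\<^sub>R (indicator S y *\<^sub>R h y))"
        unfolding frac_trunc_def set_lebesgue_integral_def eqf ..
      also have "\<dots> = I" unfolding I_def
      proof (rule Bochner_Integration.integral_cong)
        fix y :: real
        show "indicator {y. eps < \<bar>x - y\<bar>} y *\<^sub>R (indicator S y *\<^sub>R h y) = indicator S y *\<^sub>R h y"
        proof (cases "y \<in> S")
          case True
          then have "eps < \<bar>x - y\<bar>" using far[OF True] that by linarith
          then show ?thesis using True by simp
        qed simp
      qed simp
      finally show ?thesis .
    qed
    have "frac_lap_at s G x (\<sigma> * I)"
      unfolding frac_lap_at_def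
    proof (intro conjI allI impI)
      fix eps :: real assume "eps > 0"
      show "set_integrable lborel {y. eps < \<bar>x - y\<bar>} (\<lambda>y. (G x - G y) / \<bar>x - y\<bar> powr (1 + 2 * s))"
        unfolding set_integrable_def eqf
        by (rule integrable_mult_indicator[OF meas int])
    next
      have ev: "\<forall>\<^sub>F eps in at_right 0. \<sigma> * I = frac_const s * frac_trunc s G x eps"
      proof -
        have "\<forall>\<^sub>F eps in at_right (0::real). eps < 1"
          using eventually_at_right_real[of 0 "1::real"] by (rule eventually_mono) auto
        then show ?thesis by eventually_elim (auto simp: trunc \<sigma>_def)
      qed
      show "((\<lambda>eps. frac_const s * frac_trunc s G x eps) \<longlongrightarrow> \<sigma> * I) (at_right 0)"
        by (rule Lim_transform_eventually[OF tendsto_const ev])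
    qed
    moreover have "\<sigma> * I \<le> - C2 * \<bar>x\<bar> powr (-(1 + 2 * s))"
    proof -
      define c where "c = - C1 * (2 * \<bar>x\<bar>) powr (-p)"
      have intc: "integrable lborel (\<lambda>y. indicator S y *\<^sub>R c)"
        by (rule borel_integrable_compact) (auto simp: S_def)
      have "I \<le> (LINT y|lborel. indicator S y *\<^sub>R c)" unfolding I_def
      proof (rule integral_mono[OF int intc])
        fix y show "indicator S y *\<^sub>R h y \<le> indicator S y *\<^sub>R c"
        proof (cases "y \<in> S")
          case True
          have a: "\<bar>x - y\<bar> \<le> 2 * \<bar>x\<bar>" using True xR unfolding S_def by auto
          have f: "1 \<le> \<bar>x - y\<bar>" using far True by auto
          have "\<bar>x - y\<bar> powr p \<le> (2 * \<bar>x\<bar>) powr p"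
            using a f p by (intro powr_mono2) auto
          moreover have "0 < \<bar>x - y\<bar> powr p" using f by simp
          ultimately have "C1 / (2 * \<bar>x\<bar>) powr p \<le> C1 / \<bar>x - y\<bar> powr p"
            using assms \<open>x \<noteq> 0\<close> by (intro divide_left_mono mult_pos_pos) auto
          then show ?thesis using True
            by (simp add: h_def c_def powr_minus divide_inverse)
        qed simp
      qed
      also have "(LINT y|lborel. indicator S y *\<^sub>R c) = measure lborel S * c"
        by (simp add: S_def)
      also have "measure lborel S = 2 * R" using R by (simp add: S_def)
      finally have I: "I \<le> 2 * R * c" .
      have c: "c = - C1 * 2 powr (-p) * \<bar>x\<bar> powr (-p)"
        unfolding c_def by (simp add: powr_mult)
      have two: "1/8 \<le> 2 powr (-p)"
      proof -
        have "2 powr (-3) \<le> 2 powr (-p)" using p by (intro powr_mono) auto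
        moreover have "(2::real) powr (-3) = 1/8"
          by (simp add: powr_minus powr_numeral)
        ultimately show ?thesis by simp
      qed
      have key: "C2 \<le> \<sigma> * (2 * R) * C1 * 2 powr (-p)"
      proof -
        have "C2 \<le> \<sigma> * (2 * R) * C1 * (1/8)"
          unfolding R_def using sig assms by (simp add: field_simps)
        also have "\<dots> \<le> \<sigma> * (2 * R) * C1 * 2 powr (-p)"
          using two sig assms R by (intro mult_left_mono) auto
        finally show ?thesis .
      qed
      have "\<sigma> * I \<le> \<sigma> * (2 * R * c)" using I sig by (intro mult_left_mono) auto
      also have "\<dots> = - (\<sigma> * (2 * R) * C1 * 2 powr (-p)) * \<bar>x\<bar> powr (-p)"
        unfolding c by (simp add: algebra_simps)
      also have "\<dots> \<le> - C2 * \<bar>x\<bar> powr (-p)"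
        using key by (intro mult_right_mono) auto
      finally show ?thesis unfolding p_def .
    qed
    ultimately show "\<exists>v. frac_lap_at s G x v \<and> v \<le> - C2 * \<bar>x\<bar> powr (-(1 + 2 * s))"
      by blast
  qed
qed

end
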